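(* Let $\Omega\subseteq X$ be projective and suppose there are no statically traded options. Then there is no One-Point Arbitrage on $\Omega$ in $\mathcal{H}(\mathbb{F}^{\mathrm{pr}})$ if and only if $\Omega^*=\Omega$.
   Context: $X$ Polish; $\mathcal{P}$ the probability measures on its Borel $\sigma$-algebra. Fix $T\in\mathbb{N}$; $S=(S_t)_{t=0}^T$ ($\mathbb{R}^d$-valued) and $Y=(Y_t)_{t=0}^T$ ($\mathbb{R}^{\tilde d}$-valued, $Y_0$ constant) Borel processes with natural filtration $\mathbb{F}^{S,Y}$. Projective sets in a Polish space $Z$: $\Sigma^1_1$ analytic sets, $\Pi^1_n$ complements of $\Sigma^1_n$ sets, $\Sigma^1_{n+1}$ projections onto $Z$ of $\Pi^1_n$ subsets of $Z\times\mathbb{N}^{\mathbb{N}}$; projective $=\bigcup_n\Sigma^1_n$. $\mathbb{F}^{\mathrm{pr}}=(\mathcal{F}^{\mathrm{pr}}_t)$, $\mathcal{F}^{\mathrm{pr}}_t=\sigma((S_u,Y_u)^{-1}(L)\mid L\subseteq\mathbb{R}^{d+\tilde d}\text{ projective},u\le t)$. $\mathcal{H}(\mathbb{F}^{\mathrm{pr}})$: $\mathbb{R}^d$-valued $\mathbb{F}^{\mathrm{pr}}$-predictable processes $(H_t)_{t=1}^T$, $(H\circ S)_T=\sum_tH_t\cdot(S_t-S_{t-1})$. A One-Point Arbitrage on $\Omega$ is $H$ with $(H\circ S)_T\ge0$ on $\Omega$ and $>0$ at some $\omega\in\Omega$. $\mathcal{M}^f_\Omega$: finitely supported $Q\in\mathcal{P}$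 with support in $\Omega$ under which $S$ is an $\mathbb{F}^{S,Y}$-martingale; $\Omega^*=\{\omega\in\Omega\mid\exists Q\in\mathcal{M}^f_\Omega,Q(\{\omega\})>0\}$. *)

theory Defs
  imports "HOL-Analysis.Analysis" "HOL-Probability.Probability"
begin

text \<open>Alternating quantifier prefix over Baire-space elements: qpref n True P ys
  means  EX y_n ALL y_(n-1) EX ... . P ys  (n quantifiers, starting with EX),
  where the quantified elements are stored in the coordinates of ys.\<close>
fun qpref :: "nat \<Rightarrow> bool \<Rightarrow> ((nat \<Rightarrow> nat \<Rightarrow> nat) \<Rightarrow> bool) \<Rightarrow> (nat \<Rightarrow> nat \<Rightarrow> nat) \<Rightarrow> bool" where
  "qpref 0 b P ys = P ys"
| "qpref (Suc n) b P ys =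
     (if b then (\<exists>y::nat \<Rightarrow> nat. qpref n (\<not> b) P (ys(n := y)))
      else (\<forall>y::nat \<Rightarrow> nat. qpref n (\<not> b) P (ys(n := y))))"

text \<open>Sigma^1_n subsets (n >= 1) of a Polish space Z, in the standard normal form:
  A is Sigma^1_n iff A = {z. EX y1 ALL y2 ... (z, y1, ..., yn) in B} for a Borel set B
  of Z x (Baire space)^N (only the first n Baire coordinates being quantified).\<close>
definition Sigma1 :: "nat \<Rightarrow> 'a::polish_space set \<Rightarrow> bool" where
  "Sigma1 n A \<longleftrightarrow> 1 \<le> n \<and>
     (\<exists>B \<in> sets (borel :: ('a \<times> (nat \<Rightarrow> nat \<Rightarrow> nat)) measure).
        A = {z. qpref n True (\<lambda>ys. (z, ys) \<in> B) (\<lambda>_ _. 0)})"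

definition projective :: "'a::polish_space set \<Rightarrow> bool" where
  "projective A \<longleftrightarrow> (\<exists>n. Sigma1 n A)"

definition FSY :: "(nat \<Rightarrow> 'x \<Rightarrow> real^'d) \<Rightarrow> (nat \<Rightarrow> 'x \<Rightarrow> real^'e) \<Rightarrow> nat \<Rightarrow> 'x measure" where
  "FSY S Y t = sigma UNIV
     {{\<omega>. (S u \<omega>, Y u \<omega>) \<in> B} | u B. u \<le> t \<and> B \<in> sets (borel :: ((real^'d) \<times> (real^'e)) measure)}"

definition Fpr :: "(nat \<Rightarrow> 'x \<Rightarrow> real^'d) \<Rightarrow> (nat \<Rightarrow> 'x \<Rightarrow> real^'e) \<Rightarrow> nat \<Rightarrow> 'x measure" where
  "Fpr S Y t = sigma UNIV
     {{\<omega>. (S u \<omega>, Y u \<omega>) \<in> L} | u L. u \<le> t \<and> projective (L :: ((real^'d) \<times> (real^'e)) set)}"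

definition pr_predictable :: "(nat \<Rightarrow> 'x \<Rightarrow> real^'d) \<Rightarrow> (nat \<Rightarrow> 'x \<Rightarrow> real^'e) \<Rightarrow> nat
    \<Rightarrow> (nat \<Rightarrow> 'x \<Rightarrow> real^'d) \<Rightarrow> bool" where
  "pr_predictable S Y T H \<longleftrightarrow> (\<forall>t\<in>{1..T}. H t \<in> borel_measurable (Fpr S Y (t - 1)))"

definition gains :: "(nat \<Rightarrow> 'x \<Rightarrow> real^'d) \<Rightarrow> nat \<Rightarrow> (nat \<Rightarrow> 'x \<Rightarrow> real^'d) \<Rightarrow> 'x \<Rightarrow> real" where
  "gains S T H \<omega> = (\<Sum>t=1..T. H t \<omega> \<bullet> (S t \<omega> - S (t - 1) \<omega>))"

definition one_point_arbitrage :: "(nat \<Rightarrow> 'x \<Rightarrow> real^'d) \<Rightarrow> nat \<Rightarrow> 'x set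
    \<Rightarrow> (nat \<Rightarrow> 'x \<Rightarrow> real^'d) \<Rightarrow> bool" where
  "one_point_arbitrage S T \<Omega> H \<longleftrightarrow>
     (\<forall>\<omega>\<in>\<Omega>. gains S T H \<omega> \<ge> 0) \<and> (\<exists>\<omega>\<in>\<Omega>. gains S T H \<omega> > 0)"

text \<open>A finitely supported probability measure is represented as a pmf with finite support.
  S is an F^{S,Y}-martingale under Q: S_t is integrable and F^{S,Y}_t-measurable (automatic)
  and E_Q[1_A (S_{t+1} - S_t)] = 0 for every A in F^{S,Y}_t, t < T.\<close>
definition Mf :: "(nat \<Rightarrow> 'x \<Rightarrow> real^'d) \<Rightarrow> (nat \<Rightarrow> 'x \<Rightarrow> real^'e) \<Rightarrow> nat \<Rightarrow> 'x set \<Rightarrow> 'x pmf set" where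
  "Mf S Y T \<Omega> = {Q. finite (set_pmf Q) \<and> set_pmf Q \<subseteq> \<Omega> \<and>
      (\<forall>t\<le>T. integrable (measure_pmf Q) (S t)) \<and>
      (\<forall>t<T. \<forall>A\<in>sets (FSY S Y t).
         (\<integral>\<omega>. indicator A \<omega> *\<^sub>R (S (Suc t) \<omega> - S t \<omega>) \<partial>measure_pmf Q) = 0)}"

definition Omega_star :: "(nat \<Rightarrow> 'x \<Rightarrow> real^'d) \<Rightarrow> (nat \<Rightarrow> 'x \<Rightarrow> real^'e) \<Rightarrow> nat \<Rightarrow> 'x set \<Rightarrow> 'x set" where
  "Omega_star S Y T \<Omega> = {\<omega>\<in>\<Omega>. \<exists>Q\<in>Mf S Y T \<Omega>. pmf Q \<omega> > 0}"

end

theory Submission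
  imports Defs
begin

lemma sum_ext0:
  fixes g :: "'i \<Rightarrow> 'a::real_vector"
  assumes "finite A" "F \<subseteq> A"
  shows "(\<Sum>i\<in>A. (if i \<in> F then w i else 0) *\<^sub>R g i) = (\<Sum>i\<in>F. w i *\<^sub>R g i)"
proof -
  have "(\<Sum>i\<in>A. (if i \<in> F then w i else 0) *\<^sub>R g i) = (\<Sum>i\<in>A. if i \<in> F then w i *\<^sub>R g i else 0)"
    by (rule sum.cong) auto
  also have "\<dots> = (\<Sum>i\<in>A \<inter> F. w i *\<^sub>R g i)" using assms(1) by (simp add: sum.inter_restrict)
  also have "A \<inter> F = F" using assms(2) by blast
  finally show ?thesis .
qed

lemma cone_sep:
  fixes f :: "'i \<Rightarrow> 'a::euclidean_space"
  assumes i0: "i0 \<in> N"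
    and no: "\<not> (\<exists>F w. finite F \<and> F \<subseteq> N \<and> i0 \<in> F \<and> (\<forall>i\<in>F. w i > 0) \<and> (\<Sum>i\<in>F. w i *\<^sub>R f i) = 0)"
  shows "\<exists>h. (\<forall>i\<in>N. 0 \<le> h \<bullet> f i) \<and> (\<exists>i\<in>N. 0 < h \<bullet> f i)"
proof -
  define C where "C = {y. \<exists>F w. finite F \<and> F \<subseteq> N \<and> (\<forall>i\<in>F. 0 \<le> w i) \<and> y = (\<Sum>i\<in>F. w i *\<^sub>R f i)}"
  have C0: "0 \<in> C" unfolding C_def by (rule CollectI, rule exI[of _ "{}"]) auto
  have Cf: "f i \<in> C" if "i \<in> N" for i
    unfolding C_def using that by (intro CollectI exI[of _ "{i}"] exI[of _ "\<lambda>_. 1"]) auto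
  have convC: "convex C"
    unfolding convex_def
  proof (intro ballI allI impI)
    fix x y and u v :: real
    assume x: "x \<in> C" and y: "y \<in> C" and uv: "0 \<le> u" "0 \<le> v" "u + v = 1"
    from x obtain F w where F: "finite F" "F \<subseteq> N" "\<forall>i\<in>F. 0 \<le> w i" "x = (\<Sum>i\<in>F. w i *\<^sub>R f i)"
      unfolding C_def mem_Collect_eq by (elim exE conjE) fast
    from y obtain G z where G: "finite G" "G \<subseteq> N" "\<forall>i\<in>G. 0 \<le> z i" "y = (\<Sum>i\<in>G. z i *\<^sub>R f i)"
      unfolding C_def mem_Collect_eq by (elim exE conjE) fast
    define q where "q i = u * (if i \<in> F then w i else 0) + v * (if i \<in> G then z i else 0)" for i
    have "(\<Sum>i\<in>F \<union> G. q i *\<^sub>R f i) = u *\<^sub>R (\<Sum>i\<in>F \<union> G. (if i \<in> F then w i else 0) *\<^sub>R f i)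
         + v *\<^sub>R (\<Sum>i\<in>F \<union> G. (if i \<in> G then z i else 0) *\<^sub>R f i)"
    proof -
      have "(\<Sum>i\<in>F \<union> G. q i *\<^sub>R f i) = (\<Sum>i\<in>F \<union> G. u *\<^sub>R ((if i \<in> F then w i else 0) *\<^sub>R f i) + v *\<^sub>R ((if i \<in> G then z i else 0) *\<^sub>R f i))"
        unfolding q_def by (intro sum.cong refl) (simp only: scaleR_add_left scaleR_scaleR)
      also have "\<dots> = u *\<^sub>R (\<Sum>i\<in>F \<union> G. (if i \<in> F then w i else 0) *\<^sub>R f i)
         + v *\<^sub>R (\<Sum>i\<in>F \<union> G. (if i \<in> G then z i else 0) *\<^sub>R f i)"
        by (simp only: sum.distrib scaleR_sum_right)
      finally show ?thesis .
    qed
    also have "\<dots> = u *\<^sub>R x + v *\<^sub>R y"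
      using F G by (simp add: sum_ext0)
    finally have "u *\<^sub>R x + v *\<^sub>R y = (\<Sum>i\<in>F \<union> G. q i *\<^sub>R f i)" by simp
    moreover have "\<forall>i\<in>F \<union> G. 0 \<le> q i" using F G uv unfolding q_def by auto
    ultimately show "u *\<^sub>R x + v *\<^sub>R y \<in> C" unfolding C_def using F G
      by (intro CollectI exI[of _ "F \<union> G"] exI[of _ q]) auto
  qed
  have fi0: "f i0 \<noteq> 0"
  proof
    assume "f i0 = 0"
    show False
      apply (rule notE[OF no])
      apply (rule exI[of _ "{i0}"], rule exI[of _ "\<lambda>_. 1"])
      using i0 \<open>f i0 = 0\<close> by simp
  qed
  have nri: "0 \<notin> rel_interior C"
  proof
    assume "0 \<in> rel_interior C"
    then obtain e where e: "e > 0" "ball 0 e \<inter> affine hull C \<subseteq> C"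
      unfolding mem_rel_interior_ball by blast
    define \<delta> where "\<delta> = e / (2 * norm (f i0))"
    have dpos: "\<delta> > 0" unfolding \<delta>_def using e fi0 by simp
    have "norm (- \<delta> *\<^sub>R f i0) = e / 2" unfolding \<delta>_def using fi0 e by simp
    then have "- \<delta> *\<^sub>R f i0 \<in> ball 0 e" using e by simp
    moreover have "- \<delta> *\<^sub>R f i0 \<in> affine hull C"
    proof -
      have "(1 + \<delta>) *\<^sub>R 0 + (- \<delta>) *\<^sub>R f i0 \<in> affine hull C"
        by (rule mem_affine[OF affine_affine_hull]) (use C0 Cf[OF i0] hull_inc in auto)
      then show ?thesis by simp
    qed
    ultimately have "- \<delta> *\<^sub>R f i0 \<in> ball 0 e \<inter> affine hull C" by (rule IntI)
    then have "- \<delta> *\<^sub>R f i0 \<in> C" using e(2) by (rule subsetD[rotated])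
    then obtain F w where F: "finite F" "F \<subseteq> N" "\<forall>i\<in>F. 0 \<le> w i" "- \<delta> *\<^sub>R f i0 = (\<Sum>i\<in>F. w i *\<^sub>R f i)"
      unfolding C_def mem_Collect_eq by (elim exE conjE) fast
    define F' where "F' = {i\<in>F. w i > 0} \<union> {i0}"
    define w' where "w' i = (if i \<in> F then w i else 0) + (if i = i0 then \<delta> else 0)" for i
    have fF': "finite F'" unfolding F'_def using F by auto
    have "(\<Sum>i\<in>F'. w' i *\<^sub>R f i) = (\<Sum>i\<in>F'. (if i \<in> F then w i else 0) *\<^sub>R f i) + (\<Sum>i\<in>F'. (if i = i0 then \<delta> else 0) *\<^sub>R f i)"
      unfolding w'_def by (simp only: scaleR_add_left sum.distrib)
    also have "(\<Sum>i\<in>F'. (if i = i0 then \<delta> else 0) *\<^sub>R f i) = \<delta> *\<^sub>R f i0"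
    proof -
      have "(\<Sum>i\<in>F'. (if i = i0 then \<delta> else 0) *\<^sub>R f i) = (\<Sum>i\<in>F'. if i0 = i then \<delta> *\<^sub>R f i else 0)"
        by (intro sum.cong) auto
      also have "\<dots> = \<delta> *\<^sub>R f i0" using fF' by (simp add: sum.delta F'_def)
      finally show ?thesis .
    qed
    also have "(\<Sum>i\<in>F'. (if i \<in> F then w i else 0) *\<^sub>R f i) = (\<Sum>i\<in>F'. (if i \<in> {i\<in>F. w i > 0} then w i else 0) *\<^sub>R f i)"
      using F by (intro sum.cong) auto
    also have "\<dots> = (\<Sum>i\<in>{i\<in>F. w i > 0}. w i *\<^sub>R f i)"
      using fF' by (rule sum_ext0) (auto simp: F'_def)
    also have "\<dots> = (\<Sum>i\<in>F. w i *\<^sub>R f i)"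
      using F by (intro sum.mono_neutral_left) auto
    also have "(\<Sum>i\<in>F. w i *\<^sub>R f i) = - \<delta> *\<^sub>R f i0" using F(4) by simp
    finally have "(\<Sum>i\<in>F'. w' i *\<^sub>R f i) = 0" by simp
    moreover have "\<forall>i\<in>F'. w' i > 0"
    proof
      fix i assume "i \<in> F'"
      then consider "i \<in> F" "w i > 0" | "i = i0" unfolding F'_def by blast
      then show "w' i > 0"
      proof cases
        case 1 then show ?thesis unfolding w'_def using dpos by auto
      next
        case 2 then show ?thesis unfolding w'_def using dpos F(3) by (auto intro: add_nonneg_pos)
      qed
    qed
    moreover have "F' \<subseteq> N" "i0 \<in> F'" unfolding F'_def using F(2) i0 by auto
    ultimately have "finite F' \<and> F' \<subseteq> N \<and> i0 \<in> F' \<and> (\<forall>i\<in>F'. w' i > 0) \<and> (\<Sum>i\<in>F'. w' i *\<^sub>R f i) = 0"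
      using fF' by simp
    then have "\<exists>F w. finite F \<and> F \<subseteq> N \<and> i0 \<in> F \<and> (\<forall>i\<in>F. w i > 0) \<and> (\<Sum>i\<in>F. w i *\<^sub>R f i) = 0"
      by (rule exI[of _ F', OF exI[of _ w']])
    with no show False by contradiction
  qed
  obtain a where a: "\<And>y. y \<in> C \<Longrightarrow> a \<bullet> 0 \<le> a \<bullet> y" "\<And>y. y \<in> rel_interior C \<Longrightarrow> a \<bullet> 0 < a \<bullet> y"
    using supporting_hyperplane_rel_boundary[OF convC C0 nri] by blast
  have "rel_interior C \<noteq> {}" using rel_interior_eq_empty[OF convC] C0 by blast
  then obtain y where y: "y \<in> rel_interior C" by blast
  then have "y \<in> C" using rel_interior_subset by blast
  then obtain F w where F: "finite F" "F \<subseteq> N" "\<forall>i\<in>F. 0 \<le> w i" "y = (\<Sum>i\<in>F. w i *\<^sub>R f i)"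
    unfolding C_def mem_Collect_eq by (elim exE conjE) fast
  have "0 < a \<bullet> y" using a(2)[OF y] by simp
  also have "a \<bullet> y = (\<Sum>i\<in>F. w i * (a \<bullet> f i))" using F(4) by (simp add: inner_sum_right)
  finally have "\<exists>i\<in>F. 0 < a \<bullet> f i"
  proof (rule contrapos_pp)
    assume "\<not> (\<exists>i\<in>F. 0 < a \<bullet> f i)"
    then have "\<forall>i\<in>F. w i * (a \<bullet> f i) \<le> 0" using F(3) by (auto simp: mult_nonneg_nonpos)
    then show "\<not> 0 < (\<Sum>i\<in>F. w i * (a \<bullet> f i))" by (simp add: sum_nonpos not_less)
  qed
  then show ?thesis using a(1) Cf F(2) by (intro exI[of _ a]) auto
qed

definition phi :: "(nat \<Rightarrow> 'x \<Rightarrow> 'a) \<Rightarrow> (nat \<Rightarrow> 'x \<Rightarrow> 'b) \<Rightarrow> nat \<Rightarrow> 'x \<Rightarrow> ('a \<times> 'b) list" where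
  "phi S Y t a = map (\<lambda>u. (S u a, Y u a)) [0..<Suc t]"

lemma phi_eq: "phi S Y t a = phi S Y t b \<longleftrightarrow> (\<forall>u\<le>t. S u a = S u b \<and> Y u a = Y u b)"
  unfolding phi_def map_eq_conv by (auto simp: less_Suc_eq_le)

lemma phi_mono: "s \<le> t \<Longrightarrow> phi S Y t a = phi S Y t b \<Longrightarrow> phi S Y s a = phi S Y s b"
  by (auto simp: phi_eq)

lemma sigma_sat:
  assumes "\<And>g. g \<in> G \<Longrightarrow> (a \<in> g \<longleftrightarrow> b \<in> g)" and "A \<in> sets (sigma UNIV G)"
  shows "a \<in> A \<longleftrightarrow> b \<in> A"
proof -
  have "A \<in> sigma_sets UNIV G" using assms(2) by (simp add: sets_measure_of)
  then show ?thesis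
  proof induct
    case (Basic x) then show ?case using assms(1) by blast
  next
    case Empty then show ?case by simp
  next
    case (Compl x) then show ?case by simp
  next
    case (Union A) then show ?case by simp
  qed
qed

lemma FSY_sat: "phi S Y t a = phi S Y t b \<Longrightarrow> A \<in> sets (FSY S Y t) \<Longrightarrow> (a \<in> A \<longleftrightarrow> b \<in> A)"
  unfolding FSY_def by (erule sigma_sat[rotated]) (auto simp: phi_eq)

lemma Fpr_sat: "phi S Y t a = phi S Y t b \<Longrightarrow> A \<in> sets (Fpr S Y t) \<Longrightarrow> (a \<in> A \<longleftrightarrow> b \<in> A)"
  unfolding Fpr_def by (erule sigma_sat[rotated]) (auto simp: phi_eq)

lemma space_Fpr: "space (Fpr S Y t) = UNIV"
  unfolding Fpr_def by (simp add: space_measure_of_conv)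

lemma Fpr_const:
  fixes f :: "'x \<Rightarrow> 'c::metric_space"
  assumes f: "f \<in> borel_measurable (Fpr S Y t)" and ab: "phi S Y t a = phi S Y t b"
  shows "f a = f b"
proof -
  have "f -` {f a} \<inter> space (Fpr S Y t) \<in> sets (Fpr S Y t)"
    by (rule measurable_sets[OF f]) (intro borel_closed closed_singleton)
  then have "f -` {f a} \<in> sets (Fpr S Y t)" by (simp add: space_Fpr)
  from Fpr_sat[OF ab this] show ?thesis by simp
qed

lemma projective_singleton: "projective {c::'a::polish_space}"
  unfolding projective_def Sigma1_def
proof (intro exI[of _ 1] conjI bexI)
  show "{c} \<times> UNIV \<in> sets (borel :: ('a \<times> (nat \<Rightarrow> nat \<Rightarrow> nat)) measure)"
    by (intro borel_closed closed_Times closed_singleton closed_UNIV)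
  show "{c} = {z. qpref 1 True (\<lambda>ys. (z, ys) \<in> {c} \<times> UNIV) (\<lambda>_ _. 0)}"
    by simp
qed simp

lemma node_sets:
  assumes "\<And>u. u \<le> t \<Longrightarrow> {a. S u a = S u b \<and> Y u a = Y u b} \<in> sets M"
  shows "{a. phi S Y t a = phi S Y t b} \<in> sets M"
proof -
  have "{a. phi S Y t a = phi S Y t b} = (\<Inter>u\<in>{..t}. {a. S u a = S u b \<and> Y u a = Y u b})"
    by (auto simp: phi_eq)
  also have "\<dots> \<in> sets M" by (rule sets.finite_INT) (auto intro: assms)
  finally show ?thesis .
qed

lemma FSY_gen:
  assumes "u \<le> t" shows "{a. S u a = S u b \<and> Y u a = Y u b} \<in> sets (FSY S Y t)"
proof -
  have e: "{a. S u a = S u b \<and> Y u a = Y u b} = {\<omega>. (S u \<omega>, Y u \<omega>) \<in> {(S u b, Y u b)}}" by simp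
  have "{(S u b, Y u b)} \<in> sets (borel :: ((real^'b) \<times> (real^'c)) measure)" by (intro borel_closed closed_singleton)
  then have "{\<omega>. (S u \<omega>, Y u \<omega>) \<in> {(S u b, Y u b)}} \<in> {{\<omega>. (S u \<omega>, Y u \<omega>) \<in> B} | u B. u \<le> t \<and> B \<in> sets (borel :: ((real^'b) \<times> (real^'c)) measure)}"
    using assms by blast
  then have "{\<omega>. (S u \<omega>, Y u \<omega>) \<in> {(S u b, Y u b)}} \<in> sigma_sets UNIV {{\<omega>. (S u \<omega>, Y u \<omega>) \<in> B} | u B. u \<le> t \<and> B \<in> sets (borel :: ((real^'b) \<times> (real^'c)) measure)}"
    by (rule sigma_sets.Basic)
  then show ?thesis unfolding e FSY_def by (subst sets_measure_of) auto
qed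

lemma Fpr_gen:
  assumes "u \<le> t" shows "{a. S u a = S u b \<and> Y u a = Y u b} \<in> sets (Fpr S Y t)"
proof -
  have e: "{a. S u a = S u b \<and> Y u a = Y u b} = {\<omega>. (S u \<omega>, Y u \<omega>) \<in> {(S u b, Y u b)}}" by simp
  have "projective {(S u b, Y u b)}" by (rule projective_singleton)
  then have "{\<omega>. (S u \<omega>, Y u \<omega>) \<in> {(S u b, Y u b)}} \<in> {{\<omega>. (S u \<omega>, Y u \<omega>) \<in> L} | u L. u \<le> t \<and> projective L}"
    using assms by blast
  then have "{\<omega>. (S u \<omega>, Y u \<omega>) \<in> {(S u b, Y u b)}} \<in> sigma_sets UNIV {{\<omega>. (S u \<omega>, Y u \<omega>) \<in> L} | u L. u \<le> t \<and> projective L}"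
    by (rule sigma_sets.Basic)
  then show ?thesis unfolding e Fpr_def by (subst sets_measure_of) auto
qed

lemma sum_class_zero:
  fixes H \<Delta> :: "'x \<Rightarrow> 'a::real_inner"
  assumes D: "finite D" and Hc: "\<And>a b. a \<in> D \<Longrightarrow> b \<in> D \<Longrightarrow> g a = g b \<Longrightarrow> H a = H b"
    and cls: "\<And>b. b \<in> D \<Longrightarrow> (\<Sum>a\<in>{a\<in>D. g a = g b}. p a *\<^sub>R \<Delta> a) = 0"
  shows "(\<Sum>a\<in>D. p a * (H a \<bullet> \<Delta> a)) = 0"
proof -
  have "(\<Sum>a\<in>D. p a * (H a \<bullet> \<Delta> a)) = (\<Sum>y\<in>g ` D. \<Sum>a\<in>{a\<in>D. g a = y}. p a * (H a \<bullet> \<Delta> a))"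
    using sum.group[of D "g ` D" g "\<lambda>a. p a * (H a \<bullet> \<Delta> a)"] D by simp
  also have "\<dots> = (\<Sum>y\<in>g ` D. 0)"
  proof (rule sum.cong[OF refl])
    fix y assume "y \<in> g ` D"
    then obtain b where b: "b \<in> D" "y = g b" by blast
    have "(\<Sum>a\<in>{a\<in>D. g a = y}. p a * (H a \<bullet> \<Delta> a)) = (\<Sum>a\<in>{a\<in>D. g a = g b}. H b \<bullet> (p a *\<^sub>R \<Delta> a))"
    proof (rule sum.cong)
      show "{a\<in>D. g a = y} = {a\<in>D. g a = g b}" using b by simp
      fix a assume a: "a \<in> {a\<in>D. g a = g b}"
      then have "H a = H b" using Hc[of a b] b(1) by blast
      then show "p a * (H a \<bullet> \<Delta> a) = H b \<bullet> (p a *\<^sub>R \<Delta> a)" by simp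
    qed
    also have "\<dots> = H b \<bullet> (\<Sum>a\<in>{a\<in>D. g a = g b}. p a *\<^sub>R \<Delta> a)" by (simp add: inner_sum_right)
    also have "\<dots> = 0" using cls[OF b(1)] by simp
    finally show "(\<Sum>a\<in>{a\<in>D. g a = y}. p a * (H a \<bullet> \<Delta> a)) = 0" .
  qed
  finally show ?thesis by simp
qed

definition goodPE :: "(nat \<Rightarrow> 'x \<Rightarrow> real^'d) \<Rightarrow> (nat \<Rightarrow> 'x \<Rightarrow> real^'e) \<Rightarrow> nat \<Rightarrow> 'x set \<Rightarrow> nat \<Rightarrow> 'x
    \<Rightarrow> ('x \<Rightarrow> real) \<Rightarrow> 'x set \<Rightarrow> bool" where
  "goodPE S Y T \<Omega> t \<omega> p E \<longleftrightarrow> finite E \<and> E \<subseteq> {a\<in>\<Omega>. phi S Y t a = phi S Y t \<omega>} \<and> (\<forall>a. a \<notin> E \<longrightarrow> p a = 0)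
     \<and> (\<forall>a. 0 \<le> p a) \<and> sum p E = 1 \<and> 0 < p \<omega> \<and>
     (\<forall>s A. t \<le> s \<longrightarrow> s < T \<longrightarrow> (\<forall>a b. phi S Y s a = phi S Y s b \<longrightarrow> (a \<in> A \<longleftrightarrow> b \<in> A)) \<longrightarrow>
        (\<Sum>a\<in>E. p a *\<^sub>R (indicator A a *\<^sub>R (S (Suc s) a - S s a))) = 0)"

definition goodP where "goodP S Y T \<Omega> t \<omega> \<longleftrightarrow> (\<exists>p E. goodPE S Y T \<Omega> t \<omega> p E)"

lemma goodP_T:
  assumes "\<omega> \<in> \<Omega>" shows "goodP S Y T \<Omega> T \<omega>"
proof -
  have "goodPE S Y T \<Omega> T \<omega> (\<lambda>a. if a = \<omega> then 1 else 0) {\<omega>}"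
    unfolding goodPE_def
  proof (intro conjI)
    show "{\<omega>} \<subseteq> {a \<in> \<Omega>. phi S Y T a = phi S Y T \<omega>}" using assms by blast
    show "\<forall>s A. T \<le> s \<longrightarrow> s < T \<longrightarrow> (\<forall>a b. phi S Y s a = phi S Y s b \<longrightarrow> (a \<in> A \<longleftrightarrow> b \<in> A)) \<longrightarrow>
        (\<Sum>a\<in>{\<omega>}. (if a = \<omega> then 1 else 0) *\<^sub>R (indicator A a *\<^sub>R (S (Suc s) a - S s a))) = 0"
      by (intro allI impI) linarith
  qed simp_all
  then show ?thesis unfolding goodP_def by blast
qed

lemma mix_sum:
  fixes G :: "'x \<Rightarrow> 'v::real_vector"
  assumes F: "finite F" and EE: "\<And>i. i \<in> F \<Longrightarrow> finite (EE i)"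
    and z: "\<And>i a. i \<in> F \<Longrightarrow> a \<notin> EE i \<Longrightarrow> pp i a = 0"
  shows "(\<Sum>a\<in>(\<Union>i\<in>F. EE i). (\<Sum>i\<in>F. w i * pp i a) *\<^sub>R G a) = (\<Sum>i\<in>F. w i *\<^sub>R (\<Sum>a\<in>EE i. pp i a *\<^sub>R G a))"
proof -
  let ?E = "\<Union>i\<in>F. EE i"
  have fE: "finite ?E" using F EE by simp
  have "(\<Sum>a\<in>?E. (\<Sum>i\<in>F. w i * pp i a) *\<^sub>R G a) = (\<Sum>a\<in>?E. \<Sum>i\<in>F. w i *\<^sub>R (pp i a *\<^sub>R G a))"
    by (simp add: scaleR_sum_left)
  also have "\<dots> = (\<Sum>i\<in>F. \<Sum>a\<in>?E. w i *\<^sub>R (pp i a *\<^sub>R G a))" by (rule sum.swap)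
  also have "\<dots> = (\<Sum>i\<in>F. w i *\<^sub>R (\<Sum>a\<in>EE i. pp i a *\<^sub>R G a))"
  proof (rule sum.cong[OF refl])
    fix i assume i: "i \<in> F"
    have "(\<Sum>a\<in>?E. pp i a *\<^sub>R G a) = (\<Sum>a\<in>EE i. pp i a *\<^sub>R G a)"
      by (rule sum.mono_neutral_right[OF fE]) (use i z in auto)
    have "(\<Sum>a\<in>?E. w i *\<^sub>R (pp i a *\<^sub>R G a)) = w i *\<^sub>R (\<Sum>a\<in>?E. pp i a *\<^sub>R G a)"
      by (rule scaleR_sum_right[symmetric])
    also note \<open>(\<Sum>a\<in>?E. pp i a *\<^sub>R G a) = (\<Sum>a\<in>EE i. pp i a *\<^sub>R G a)\<close>
    finally show "(\<Sum>a\<in>?E. w i *\<^sub>R (pp i a *\<^sub>R G a)) = w i *\<^sub>R (\<Sum>a\<in>EE i. pp i a *\<^sub>R G a)" .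
  qed
  finally show ?thesis .
qed

lemma mix_sum_real:
  fixes pp :: "'i \<Rightarrow> 'x \<Rightarrow> real"
  assumes F: "finite F" and EE: "\<And>i. i \<in> F \<Longrightarrow> finite (EE i)"
    and z: "\<And>i a. i \<in> F \<Longrightarrow> a \<notin> EE i \<Longrightarrow> pp i a = 0"
  shows "(\<Sum>a\<in>(\<Union>i\<in>F. EE i). (\<Sum>i\<in>F. w i * pp i a)) = (\<Sum>i\<in>F. w i * (\<Sum>a\<in>EE i. pp i a))"
  using mix_sum[OF F EE z, where w = w and G = "\<lambda>_. 1::real"] by simp

lemma goodPE_D:
  assumes "goodPE S Y T \<Omega> t \<omega> p E"
  shows "finite E" "E \<subseteq> {a\<in>\<Omega>. phi S Y t a = phi S Y t \<omega>}" "\<forall>a. a \<notin> E \<longrightarrow> p a = 0"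
     "\<forall>a. 0 \<le> p a" "sum p E = 1" "0 < p \<omega>"
     "\<forall>s A. t \<le> s \<longrightarrow> s < T \<longrightarrow> (\<forall>a b. phi S Y s a = phi S Y s b \<longrightarrow> (a \<in> A \<longleftrightarrow> b \<in> A)) \<longrightarrow>
        (\<Sum>a\<in>E. p a *\<^sub>R (indicator A a *\<^sub>R (S (Suc s) a - S s a))) = 0"
proof -
  note c = assms[unfolded goodPE_def]
  from c show "finite E" by (rule conjunct1)
  from c[THEN conjunct2] show "E \<subseteq> {a\<in>\<Omega>. phi S Y t a = phi S Y t \<omega>}" by (rule conjunct1)
  from c[THEN conjunct2, THEN conjunct2] show "\<forall>a. a \<notin> E \<longrightarrow> p a = 0" by (rule conjunct1)
  from c[THEN conjunct2, THEN conjunct2, THEN conjunct2] show "\<forall>a. 0 \<le> p a" by (rule conjunct1)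
  from c[THEN conjunct2, THEN conjunct2, THEN conjunct2, THEN conjunct2] show "sum p E = 1" by (rule conjunct1)
  from c[THEN conjunct2, THEN conjunct2, THEN conjunct2, THEN conjunct2, THEN conjunct2] show "0 < p \<omega>" by (rule conjunct1)
  from c[THEN conjunct2, THEN conjunct2, THEN conjunct2, THEN conjunct2, THEN conjunct2, THEN conjunct2]
  show "\<forall>s A. t \<le> s \<longrightarrow> s < T \<longrightarrow> (\<forall>a b. phi S Y s a = phi S Y s b \<longrightarrow> (a \<in> A \<longleftrightarrow> b \<in> A)) \<longrightarrow>
        (\<Sum>a\<in>E. p a *\<^sub>R (indicator A a *\<^sub>R (S (Suc s) a - S s a))) = 0" .
qed

lemma goodP_step:
  fixes S :: "nat \<Rightarrow> 'x \<Rightarrow> real^'d" and Y :: "nat \<Rightarrow> 'x \<Rightarrow> real^'e"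
  assumes n: "n < T" and IH: "\<forall>\<omega>\<in>\<Omega>. goodP S Y T \<Omega> (Suc n) \<omega>" and \<omega>: "\<omega> \<in> \<Omega>"
    and bal: "\<exists>F w. finite F \<and> F \<subseteq> {a\<in>\<Omega>. phi S Y n a = phi S Y n \<omega>} \<and> \<omega> \<in> F \<and> (\<forall>i\<in>F. w i > 0)
               \<and> (\<Sum>i\<in>F. w i *\<^sub>R (S (Suc n) i - S n i)) = 0"
  shows "goodP S Y T \<Omega> n \<omega>"
proof -
  obtain F w where F: "finite F" "F \<subseteq> {a\<in>\<Omega>. phi S Y n a = phi S Y n \<omega>}" "\<omega> \<in> F" "\<forall>i\<in>F. w i > 0"
    "(\<Sum>i\<in>F. w i *\<^sub>R (S (Suc n) i - S n i)) = 0"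
    using bal by blast
  have "\<forall>i\<in>F. \<exists>p E. goodPE S Y T \<Omega> (Suc n) i p E" using IH F(2) unfolding goodP_def by blast
  from bchoice[OF this] obtain pp where "\<forall>i\<in>F. \<exists>E. goodPE S Y T \<Omega> (Suc n) i (pp i) E" by (elim exE)
  from bchoice[OF this] obtain EE where PE: "\<forall>i\<in>F. goodPE S Y T \<Omega> (Suc n) i (pp i) (EE i)" by (elim exE)
  define W where "W = sum w F"
  have Wpos: "W > 0" unfolding W_def
    by (rule sum_pos2[of F \<omega>]) (use F in \<open>auto intro: less_imp_le\<close>)
  define w' where "w' i = w i / W" for i
  have w'pos: "\<And>i. i \<in> F \<Longrightarrow> w' i > 0" unfolding w'_def using F(4) Wpos by simp
  have w'sum: "sum w' F = 1" unfolding w'_def using Wpos by (simp add: sum_divide_distrib[symmetric] W_def)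
  define p where "p a = (\<Sum>i\<in>F. w' i * pp i a)" for a
  define E where "E = (\<Union>i\<in>F. EE i)"
  have PE': "goodPE S Y T \<Omega> (Suc n) i (pp i) (EE i)" if "i \<in> F" for i using PE that by blast
  have fEE: "\<And>i. i \<in> F \<Longrightarrow> finite (EE i)" by (rule goodPE_D(1)[OF PE'])
  have zEE: "\<And>i a. i \<in> F \<Longrightarrow> a \<notin> EE i \<Longrightarrow> pp i a = 0" using goodPE_D(3)[OF PE'] by blast
  have nnEE: "\<And>i a. i \<in> F \<Longrightarrow> 0 \<le> pp i a" using goodPE_D(4)[OF PE'] by blast
  have sEE: "\<And>i. i \<in> F \<Longrightarrow> sum (pp i) (EE i) = 1" by (rule goodPE_D(5)[OF PE'])
  have posEE: "\<And>i. i \<in> F \<Longrightarrow> 0 < pp i i" by (rule goodPE_D(6)[OF PE'])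
  have subEE: "\<And>i. i \<in> F \<Longrightarrow> EE i \<subseteq> {a\<in>\<Omega>. phi S Y (Suc n) a = phi S Y (Suc n) i}"
    by (rule goodPE_D(2)[OF PE'])
  have mEE: "\<And>i s A. i \<in> F \<Longrightarrow> Suc n \<le> s \<Longrightarrow> s < T \<Longrightarrow> (\<forall>a b. phi S Y s a = phi S Y s b \<longrightarrow> (a \<in> A \<longleftrightarrow> b \<in> A)) \<Longrightarrow>
        (\<Sum>a\<in>EE i. pp i a *\<^sub>R (indicator A a *\<^sub>R (S (Suc s) a - S s a))) = 0"
    using goodPE_D(7)[OF PE'] by blast
  have mix: "(\<Sum>a\<in>E. p a *\<^sub>R G a) = (\<Sum>i\<in>F. w' i *\<^sub>R (\<Sum>a\<in>EE i. pp i a *\<^sub>R G a))" for G :: "'x \<Rightarrow> real^'d"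
    unfolding p_def E_def by (rule mix_sum[OF F(1) fEE zEE])
  have "goodPE S Y T \<Omega> n \<omega> p E"
    unfolding goodPE_def
  proof (intro conjI allI impI)
    show "finite E" unfolding E_def using F(1) fEE by simp
    show "E \<subseteq> {a\<in>\<Omega>. phi S Y n a = phi S Y n \<omega>}"
    proof
      fix a assume "a \<in> E"
      then obtain i where i: "i \<in> F" "a \<in> EE i" unfolding E_def by blast
      then have "a \<in> \<Omega>" "phi S Y (Suc n) a = phi S Y (Suc n) i" using subEE by blast+
      moreover have "phi S Y n i = phi S Y n \<omega>" using F(2) i(1) by blast
      ultimately show "a \<in> {a\<in>\<Omega>. phi S Y n a = phi S Y n \<omega>}" using phi_mono[of n "Suc n" S Y a i] by simp
    qed
    fix a
    show "a \<notin> E \<Longrightarrow> p a = 0" unfolding p_def E_def using zEE by simp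
    show "0 \<le> p a" unfolding p_def using nnEE w'pos by (intro sum_nonneg) (simp add: less_imp_le)
  next
    show "sum p E = 1" unfolding p_def E_def using mix_sum_real[OF F(1) fEE zEE, where w = w'] sEE w'sum by simp
    show "0 < p \<omega>" unfolding p_def using F(1,3) w'pos posEE nnEE
      by (intro sum_pos2[of F \<omega>]) (auto simp: less_imp_le)
  next
    fix s A
    assume s: "n \<le> s" "s < T" and sat: "\<forall>a b. phi S Y s a = phi S Y s b \<longrightarrow> (a \<in> A \<longleftrightarrow> b \<in> A)"
    show "(\<Sum>a\<in>E. p a *\<^sub>R (indicator A a *\<^sub>R (S (Suc s) a - S s a))) = 0"
    proof (cases "s = n")
      case False
      then have "Suc n \<le> s" using s by simp
      then have "\<And>i. i \<in> F \<Longrightarrow> (\<Sum>a\<in>EE i. pp i a *\<^sub>R (indicator A a *\<^sub>R (S (Suc s) a - S s a))) = 0"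
        using mEE s(2) sat by blast
      then show ?thesis unfolding mix by simp
    next
      case True
      have inner: "(\<Sum>a\<in>EE i. pp i a *\<^sub>R (indicator A a *\<^sub>R (S (Suc s) a - S s a)))
                 = indicator A \<omega> *\<^sub>R (S (Suc n) i - S n i)" if i: "i \<in> F" for i
      proof -
        have "(\<Sum>a\<in>EE i. pp i a *\<^sub>R (indicator A a *\<^sub>R (S (Suc s) a - S s a)))
            = (\<Sum>a\<in>EE i. pp i a *\<^sub>R (indicator A \<omega> *\<^sub>R (S (Suc n) i - S n i)))"
        proof (rule sum.cong[OF refl])
          fix a assume a: "a \<in> EE i"
          then have pa: "phi S Y (Suc n) a = phi S Y (Suc n) i" using subEE[OF i] by blast
          then have "S (Suc n) a = S (Suc n) i" "S n a = S n i" by (auto simp: phi_eq)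
          moreover have "phi S Y n a = phi S Y n \<omega>"
            using phi_mono[OF _ pa, of n] F(2) i by auto
          then have "(a \<in> A) = (\<omega> \<in> A)" using sat True by blast
          ultimately show "pp i a *\<^sub>R (indicator A a *\<^sub>R (S (Suc s) a - S s a)) = pp i a *\<^sub>R (indicator A \<omega> *\<^sub>R (S (Suc n) i - S n i))"
            using True by (simp add: indicator_def)
        qed
        also have "\<dots> = (sum (pp i) (EE i)) *\<^sub>R (indicator A \<omega> *\<^sub>R (S (Suc n) i - S n i))"
          by (rule scaleR_sum_left[symmetric])
        also have "\<dots> = indicator A \<omega> *\<^sub>R (S (Suc n) i - S n i)" using sEE[OF i] by simp
        finally show ?thesis .
      qed
      have "(\<Sum>a\<in>E. p a *\<^sub>R (indicator A a *\<^sub>R (S (Suc s) a - S s a)))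
          = (\<Sum>i\<in>F. w' i *\<^sub>R (indicator A \<omega> *\<^sub>R (S (Suc n) i - S n i)))"
        unfolding mix using inner by simp
      also have "\<dots> = (indicator A \<omega> / W) *\<^sub>R (\<Sum>i\<in>F. w i *\<^sub>R (S (Suc n) i - S n i))"
        unfolding w'_def by (simp add: scaleR_sum_right mult.commute)
      also have "\<dots> = 0" using F(5) by simp
      finally show ?thesis .
    qed
  qed
  then show ?thesis unfolding goodP_def by blast
qed

lemma goodP_all:
  fixes S :: "nat \<Rightarrow> 'x \<Rightarrow> real^'d" and Y :: "nat \<Rightarrow> 'x \<Rightarrow> real^'e"
  assumes bal: "\<And>n \<omega>. n < T \<Longrightarrow> \<omega> \<in> \<Omega> \<Longrightarrow> \<exists>F w. finite F \<and> F \<subseteq> {a\<in>\<Omega>. phi S Y n a = phi S Y n \<omega>} \<and> \<omega> \<in> F \<and> (\<forall>i\<in>F. w i > 0)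
               \<and> (\<Sum>i\<in>F. w i *\<^sub>R (S (Suc n) i - S n i)) = 0"
    and tT: "t \<le> T"
  shows "\<forall>\<omega>\<in>\<Omega>. goodP S Y T \<Omega> t \<omega>"
proof (rule inc_induct[where P = "\<lambda>t. \<forall>\<omega>\<in>\<Omega>. goodP S Y T \<Omega> t \<omega>", OF tT])
  show "\<forall>\<omega>\<in>\<Omega>. goodP S Y T \<Omega> T \<omega>" by (intro ballI goodP_T)
next
  fix n assume n: "t \<le> n" "n < T" and IH: "\<forall>\<omega>\<in>\<Omega>. goodP S Y T \<Omega> (Suc n) \<omega>"
  show "\<forall>\<omega>\<in>\<Omega>. goodP S Y T \<Omega> n \<omega>"
  proof
    fix \<omega> assume \<omega>: "\<omega> \<in> \<Omega>"
    show "goodP S Y T \<Omega> n \<omega>"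
      by (rule goodP_step[OF n(2) IH \<omega> bal[OF n(2) \<omega>]])
  qed
qed

lemma goodP_Q:
  fixes S :: "nat \<Rightarrow> 'x \<Rightarrow> real^'d" and Y :: "nat \<Rightarrow> 'x \<Rightarrow> real^'e"
  assumes "goodP S Y T \<Omega> 0 \<omega>"
  shows "\<exists>Q\<in>Mf S Y T \<Omega>. pmf Q \<omega> > 0"
proof -
  obtain p E where PE: "goodPE S Y T \<Omega> 0 \<omega> p E" using assms unfolding goodP_def by blast
  note D = goodPE_D[OF PE]
  have nn: "\<And>x. 0 \<le> p x" using D(4) by blast
  have prob: "(\<integral>\<^sup>+x. ennreal (p x) \<partial>count_space UNIV) = 1"
  proof -
    have "(\<integral>\<^sup>+x. ennreal (p x) \<partial>count_space UNIV) = (\<Sum>x\<in>E. ennreal (p x))"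
      by (rule nn_integral_count_space'[OF D(1)]) (use D(3) in auto)
    also have "\<dots> = ennreal (sum p E)" using nn by simp
    finally show ?thesis using D(5) by simp
  qed
  define Q where "Q = embed_pmf p"
  have pQ: "pmf Q x = p x" for x unfolding Q_def by (rule pmf_embed_pmf[OF nn prob])
  have sQ: "set_pmf Q \<subseteq> E" unfolding Q_def set_embed_pmf[OF nn prob] using D(3) by blast
  have fin: "finite (set_pmf Q)" using sQ D(1) by (rule finite_subset)
  have "Q \<in> Mf S Y T \<Omega>"
    unfolding Mf_def
  proof (intro CollectI conjI allI impI ballI)
    show "finite (set_pmf Q)" by (rule fin)
    show "set_pmf Q \<subseteq> \<Omega>" using sQ D(2) by blast
    fix t
    show "integrable (measure_pmf Q) (S t)" using fin by (rule integrable_measure_pmf_finite)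
  next
    fix t A assume t: "t < T" and A: "A \<in> sets (FSY S Y t)"
    have sat: "\<forall>a b. phi S Y t a = phi S Y t b \<longrightarrow> (a \<in> A \<longleftrightarrow> b \<in> A)"
      using FSY_sat[OF _ A] by blast
    have "(\<integral>\<omega>. indicator A \<omega> *\<^sub>R (S (Suc t) \<omega> - S t \<omega>) \<partial>measure_pmf Q)
        = (\<Sum>a\<in>E. pmf Q a *\<^sub>R (indicator A a *\<^sub>R (S (Suc t) a - S t a)))"
      by (rule integral_measure_pmf[OF D(1)]) (use sQ in blast)
    also have "\<dots> = (\<Sum>a\<in>E. p a *\<^sub>R (indicator A a *\<^sub>R (S (Suc t) a - S t a)))" by (simp only: pQ)
    also have "\<dots> = 0" by (rule D(7)[rule_format, OF le0 t]) (use sat in blast)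
    finally show "(\<integral>\<omega>. indicator A \<omega> *\<^sub>R (S (Suc t) \<omega> - S t \<omega>) \<partial>measure_pmf Q) = 0" .
  qed
  moreover have "pmf Q \<omega> > 0" using pQ D(6) by simp
  ultimately show ?thesis by blast
qed

lemma noarb_bal:
  fixes S :: "nat \<Rightarrow> 'x \<Rightarrow> real^'d" and Y :: "nat \<Rightarrow> 'x \<Rightarrow> real^'e"
  assumes noarb: "\<not> (\<exists>H. pr_predictable S Y T H \<and> one_point_arbitrage S T \<Omega> H)"
    and n: "n < T" and \<omega>: "\<omega> \<in> \<Omega>"
  shows "\<exists>F w. finite F \<and> F \<subseteq> {a\<in>\<Omega>. phi S Y n a = phi S Y n \<omega>} \<and> \<omega> \<in> F \<and> (\<forall>i\<in>F. w i > 0)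
               \<and> (\<Sum>i\<in>F. w i *\<^sub>R (S (Suc n) i - S n i)) = 0"
proof (rule ccontr)
  assume no: "\<not> ?thesis"
  let ?N = "{a\<in>\<Omega>. phi S Y n a = phi S Y n \<omega>}"
  have "\<omega> \<in> ?N" using \<omega> by simp
  from cone_sep[OF this no] obtain h where
    h: "\<forall>i\<in>?N. 0 \<le> h \<bullet> (S (Suc n) i - S n i)" "\<exists>i\<in>?N. 0 < h \<bullet> (S (Suc n) i - S n i)"
    by (elim exE conjE)
  define N' where "N' = {a. phi S Y n a = phi S Y n \<omega>}"
  define H where "H u a = (if u = Suc n then indicator N' a *\<^sub>R h else 0)" for u a
  have N'sets: "N' \<in> sets (Fpr S Y n)"
    unfolding N'_def by (rule node_sets) (rule Fpr_gen)
  have pr: "pr_predictable S Y T H"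
    unfolding pr_predictable_def
  proof
    fix u assume "u \<in> {1..T}"
    show "H u \<in> borel_measurable (Fpr S Y (u - 1))"
    proof (cases "u = Suc n")
      case True
      then have "H u = (\<lambda>a. indicator N' a *\<^sub>R h)" unfolding H_def by (simp add: fun_eq_iff)
      moreover have "(\<lambda>a. indicator N' a *\<^sub>R h) \<in> borel_measurable (Fpr S Y n)"
        by (intro borel_measurable_scaleR borel_measurable_indicator N'sets borel_measurable_const)
      ultimately show ?thesis using True by simp
    next
      case False
      then have "H u = (\<lambda>a. 0)" unfolding H_def by (simp add: fun_eq_iff)
      then show ?thesis by simp
    qed
  qed
  have g: "gains S T H a = indicator N' a * (h \<bullet> (S (Suc n) a - S n a))" for a
  proof -
    have "gains S T H a = (\<Sum>u\<in>{1..T}. if u = Suc n then indicator N' a * (h \<bullet> (S (Suc n) a - S n a)) else 0)"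
      unfolding gains_def by (intro sum.cong refl) (simp add: H_def)
    also have "\<dots> = indicator N' a * (h \<bullet> (S (Suc n) a - S n a))"
      using n by (simp add: sum.delta')
    finally show ?thesis .
  qed
  have "one_point_arbitrage S T \<Omega> H"
    unfolding one_point_arbitrage_def
  proof
    show "\<forall>a\<in>\<Omega>. 0 \<le> gains S T H a"
    proof
      fix a assume a: "a \<in> \<Omega>"
      show "0 \<le> gains S T H a"
      proof (cases "a \<in> N'")
        case True
        then have "a \<in> ?N" using a unfolding N'_def by simp
        then show ?thesis using h(1) True by (simp add: g)
      next
        case False
        then show ?thesis by (simp add: g)
      qed
    qed
    from h(2) obtain i where i: "i \<in> ?N" "0 < h \<bullet> (S (Suc n) i - S n i)" by blast
    then have "i \<in> N'" unfolding N'_def by simp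
    then have "0 < gains S T H i" using i by (simp add: g)
    then show "\<exists>a\<in>\<Omega>. 0 < gains S T H a" using i(1) by blast
  qed
  then show False using noarb pr by blast
qed

lemma arb_impossible:
  fixes S :: "nat \<Rightarrow> 'x \<Rightarrow> real^'d" and Y :: "nat \<Rightarrow> 'x \<Rightarrow> real^'e"
  assumes eq: "Omega_star S Y T \<Omega> = \<Omega>" and pr: "pr_predictable S Y T H" and arb: "one_point_arbitrage S T \<Omega> H"
  shows False
proof -
  from arb obtain \<omega>1 where \<omega>1: "\<omega>1 \<in> \<Omega>" "0 < gains S T H \<omega>1" and nn: "\<forall>a\<in>\<Omega>. 0 \<le> gains S T H a"
    unfolding one_point_arbitrage_def by blast
  then have "\<omega>1 \<in> Omega_star S Y T \<Omega>" using eq by simp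
  then obtain Q where Q: "Q \<in> Mf S Y T \<Omega>" "pmf Q \<omega>1 > 0" unfolding Omega_star_def by blast
  define D where "D = set_pmf Q"
  have fD: "finite D" and DO: "D \<subseteq> \<Omega>" using Q(1) unfolding Mf_def D_def by blast+
  have mart: "\<And>t A. t < T \<Longrightarrow> A \<in> sets (FSY S Y t) \<Longrightarrow>
      (\<integral>\<omega>. indicator A \<omega> *\<^sub>R (S (Suc t) \<omega> - S t \<omega>) \<partial>measure_pmf Q) = 0"
    using Q(1) unfolding Mf_def by blast
  have Z: "(\<Sum>a\<in>D. pmf Q a * (H u a \<bullet> (S u a - S (u - 1) a))) = 0" if u: "u \<in> {1..T}" for u
  proof -
    define s where "s = u - 1"
    have us: "u = Suc s" and sT: "s < T" using u unfolding s_def by auto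
    have Hm: "H u \<in> borel_measurable (Fpr S Y s)" using pr u unfolding pr_predictable_def s_def by blast
    show ?thesis unfolding s_def[symmetric]
    proof (rule sum_class_zero[OF fD, where g = "phi S Y s"])
      fix a b assume "phi S Y s a = phi S Y s b"
      then show "H u a = H u b" by (rule Fpr_const[OF Hm])
    next
      fix b assume b: "b \<in> D"
      define A where "A = {a. phi S Y s a = phi S Y s b}"
      have AS: "A \<in> sets (FSY S Y s)" unfolding A_def by (rule node_sets) (rule FSY_gen)
      have "0 = (\<integral>\<omega>. indicator A \<omega> *\<^sub>R (S (Suc s) \<omega> - S s \<omega>) \<partial>measure_pmf Q)"
        using mart[OF sT AS] by simp
      also have "\<dots> = (\<Sum>a\<in>D. pmf Q a *\<^sub>R (indicator A a *\<^sub>R (S (Suc s) a - S s a)))"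
        by (rule integral_measure_pmf[OF fD]) (simp add: D_def)
      also have "\<dots> = (\<Sum>a\<in>D. if phi S Y s a = phi S Y s b then pmf Q a *\<^sub>R (S u a - S s a) else 0)"
        by (intro sum.cong refl) (simp add: A_def indicator_def us)
      also have "\<dots> = (\<Sum>a\<in>{a\<in>D. phi S Y s a = phi S Y s b}. pmf Q a *\<^sub>R (S u a - S s a))"
        by (rule sum.inter_filter[OF fD, symmetric])
      finally show "(\<Sum>a\<in>{a\<in>D. phi S Y s a = phi S Y s b}. pmf Q a *\<^sub>R (S u a - S s a)) = 0" by simp
    qed
  qed
  have "(\<Sum>a\<in>D. pmf Q a * gains S T H a) = (\<Sum>u\<in>{1..T}. \<Sum>a\<in>D. pmf Q a * (H u a \<bullet> (S u a - S (u - 1) a)))"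
    unfolding gains_def by (simp add: sum_distrib_left sum.swap[of _ D])
  also have "\<dots> = 0" using Z by simp
  finally have z: "(\<Sum>a\<in>D. pmf Q a * gains S T H a) = 0" .
  have "0 < (\<Sum>a\<in>D. pmf Q a * gains S T H a)"
  proof (rule sum_pos2[OF fD])
    show "\<omega>1 \<in> D" unfolding D_def using Q(2) by (simp add: set_pmf_iff)
    show "0 < pmf Q \<omega>1 * gains S T H \<omega>1" using Q(2) \<omega>1(2) by simp
    fix a assume "a \<in> D"
    then show "0 \<le> pmf Q a * gains S T H a" using nn DO by auto
  qed
  then show False using z by simp
qed

theorem lemma3p6:
  fixes S :: "nat \<Rightarrow> 'x::polish_space \<Rightarrow> real^'d"
    and Y :: "nat \<Rightarrow> 'x \<Rightarrow> real^'e"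
    and T :: nat
    and \<Omega> :: "'x set"
  assumes S_borel: "\<forall>t\<le>T. S t \<in> borel_measurable borel"
    and Y_borel: "\<forall>t\<le>T. Y t \<in> borel_measurable borel"
    and Y0_const: "\<exists>c. \<forall>\<omega>. Y 0 \<omega> = c"
    and \<Omega>_proj: "projective \<Omega>"
  shows "(\<not> (\<exists>H. pr_predictable S Y T H \<and> one_point_arbitrage S T \<Omega> H))
           \<longleftrightarrow> Omega_star S Y T \<Omega> = \<Omega>"
proof
  assume noarb: "\<not> (\<exists>H. pr_predictable S Y T H \<and> one_point_arbitrage S T \<Omega> H)"
  have all: "\<forall>\<omega>\<in>\<Omega>. goodP S Y T \<Omega> 0 \<omega>"
    by (rule goodP_all[OF noarb_bal[OF noarb]]) simp_all
  show "Omega_star S Y T \<Omega> = \<Omega>"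
  proof
    show "Omega_star S Y T \<Omega> \<subseteq> \<Omega>" unfolding Omega_star_def by blast
    show "\<Omega> \<subseteq> Omega_star S Y T \<Omega>"
    proof
      fix \<omega> assume \<omega>: "\<omega> \<in> \<Omega>"
      have "\<exists>Q\<in>Mf S Y T \<Omega>. pmf Q \<omega> > 0" by (rule goodP_Q) (use all \<omega> in blast)
      then show "\<omega> \<in> Omega_star S Y T \<Omega>" unfolding Omega_star_def using \<omega> by blast
    qed
  qed
next
  assume eq: "Omega_star S Y T \<Omega> = \<Omega>"
  show "\<not> (\<exists>H. pr_predictable S Y T H \<and> one_point_arbitrage S T \<Omega> H)"
    using arb_impossible[OF eq] by blast
qed

end
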